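(* Let $\mathfrak B,\mathfrak D^+,\mathfrak D^-$ be Banach spaces and let $I^+\colon\mathfrak D^+\to\mathfrak B$, $I^-\colon\mathfrak B\to\mathfrak D^-$ be injective continuous linear embeddings with dense ranges. Let $T\colon\mathfrak D^+\to\mathfrak D^-$ be a bounded linear operator, and let $T^\bullet=(I^-)^{-1}T(I^+)^{-1}$ be the operator in $\mathfrak B$ with domain $\{x\in I^+(\mathfrak D^+)\;:\;T(I^+)^{-1}x\in I^-(\mathfrak B)\}$, acting by $T^\bullet x=(I^-)^{-1}T(I^+)^{-1}x$. Then every $\lambda\in\mathbb C$ for which $T-\lambda I^-I^+\colon\mathfrak D^+\to\mathfrak D^-$ has a bounded inverse belongs to the resolvent set of $T^\bullet$, and $$(T^\bullet-\lambda)^{-1}=I^+\,(T-\lambda I^-I^+)^{-1}I^-.$$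
   Context: "Has a bounded inverse" means: the operator is a bijection of $\mathfrak D^+$ onto $\mathfrak D^-$ with bounded inverse. *)

theory Defs
  imports "HOL-Analysis.Analysis"
begin

class scaleC =
  fixes scaleC :: "complex \<Rightarrow> 'a \<Rightarrow> 'a" (infixr \<open>*\<^sub>C\<close> 75)

class complex_vector = scaleC + real_vector +
  assumes scaleC_add_right: "a *\<^sub>C (x + y) = a *\<^sub>C x + a *\<^sub>C y"
    and scaleC_add_left: "(a + b) *\<^sub>C x = a *\<^sub>C x + b *\<^sub>C x"
    and scaleC_scaleC: "a *\<^sub>C (b *\<^sub>C x) = (a * b) *\<^sub>C x"
    and scaleC_one: "1 *\<^sub>C x = x"
    and scaleR_scaleC: "scaleR r x = (complex_of_real r) *\<^sub>C x"

class complex_normed_vector = complex_vector + real_normed_vector +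
  assumes norm_scaleC: "norm (a *\<^sub>C x) = cmod a * norm x"

class complex_banach = complex_normed_vector + banach

definition bounded_clinear :: "('a::complex_normed_vector \<Rightarrow> 'b::complex_normed_vector) \<Rightarrow> bool" where
  "bounded_clinear f \<longleftrightarrow> bounded_linear f \<and> (\<forall>c x. f (c *\<^sub>C x) = c *\<^sub>C f x)"

definition resolvent_set :: "'a::complex_banach set \<Rightarrow> ('a \<Rightarrow> 'a) \<Rightarrow> complex set" where
  "resolvent_set D A = {l. bij_betw (\<lambda>x. A x - l *\<^sub>C x) D UNIV \<and>
      bounded_clinear (the_inv_into D (\<lambda>x. A x - l *\<^sub>C x))}"

definition tdot_dom :: "('d \<Rightarrow> 'b) \<Rightarrow> ('b \<Rightarrow> 'e) \<Rightarrow> ('d \<Rightarrow> 'e) \<Rightarrow> 'b set" where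
  "tdot_dom Jp Jm T = {x \<in> range Jp. T (inv Jp x) \<in> range Jm}"

definition tdot :: "('d \<Rightarrow> 'b) \<Rightarrow> ('b \<Rightarrow> 'e) \<Rightarrow> ('d \<Rightarrow> 'e) \<Rightarrow> 'b \<Rightarrow> 'b" where
  "tdot Jp Jm T x = inv Jm (T (inv Jp x))"

end

theory Submission
  imports Defs
begin

lemma bcl_comp: "bounded_clinear f \<Longrightarrow> bounded_clinear g \<Longrightarrow> bounded_clinear (\<lambda>x. f (g x))"
  unfolding bounded_clinear_def using bounded_linear_compose[of f g] by (auto simp: o_def)

lemma bcl_diff: "bounded_clinear f \<Longrightarrow> f (a - b) = f a - f b"
  unfolding bounded_clinear_def using linear_diff bounded_linear.linear by blast

lemma bcl_add: "bounded_clinear f \<Longrightarrow> f (a + b) = f a + f b"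
  unfolding bounded_clinear_def using linear_add bounded_linear.linear by blast

lemma bcl_scale: "bounded_clinear f \<Longrightarrow> f (c *\<^sub>C a) = c *\<^sub>C f a"
  unfolding bounded_clinear_def by blast

theorem mainTheorem2:
  fixes Jp :: "'d::complex_banach \<Rightarrow> 'b::complex_banach"
    and Jm :: "'b \<Rightarrow> 'e::complex_banach"
    and T :: "'d \<Rightarrow> 'e"
    and lam :: complex
  assumes Ip_bd: "bounded_clinear Jp" and Ip_inj: "inj Jp" and Ip_dense: "closure (range Jp) = UNIV"
    and Im_bd: "bounded_clinear Jm" and Im_inj: "inj Jm" and Im_dense: "closure (range Jm) = UNIV"
    and T_bd: "bounded_clinear T"
    and bij: "bij (\<lambda>x. T x - lam *\<^sub>C Jm (Jp x))"
    and inv_bd: "bounded_clinear (inv (\<lambda>x. T x - lam *\<^sub>C Jm (Jp x)))"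
  shows "lam \<in> resolvent_set (tdot_dom Jp Jm T) (tdot Jp Jm T) \<and>
    (\<forall>y. the_inv_into (tdot_dom Jp Jm T) (\<lambda>x. tdot Jp Jm T x - lam *\<^sub>C x) y
         = Jp (inv (\<lambda>x. T x - lam *\<^sub>C Jm (Jp x)) (Jm y)))"
proof -
  define S where "S = (\<lambda>x. T x - lam *\<^sub>C Jm (Jp x))"
  define R where "R = inv S"
  define D where "D = tdot_dom Jp Jm T"
  define f where "f = (\<lambda>x. tdot Jp Jm T x - lam *\<^sub>C x)"
  define g where "g = (\<lambda>y. Jp (R (Jm y)))"
  have SR: "S (R e) = e" for e using bij unfolding R_def using surj_f_inv_f[OF bij_is_surj[OF bij]] unfolding S_def by blast
  have RS: "R (S d) = d" for d using bij unfolding R_def using inv_f_f[OF bij_is_inj[OF bij]] unfolding S_def by blast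
  have left: "g (f x) = x" if "x \<in> D" for x
  proof -
    from that obtain d where d: "x = Jp d" and "T (inv Jp x) \<in> range Jm"
      unfolding D_def tdot_dom_def by auto
    then have id: "inv Jp x = d" using Ip_inj by simp
    then obtain b where b: "T d = Jm b" using \<open>T (inv Jp x) \<in> range Jm\<close> by auto
    have fx: "f x = b - lam *\<^sub>C x" unfolding f_def tdot_def id b using Im_inj by simp
    have "Jm (f x) = S d" unfolding fx S_def bcl_diff[OF Im_bd] bcl_scale[OF Im_bd] b using d by simp
    then show ?thesis unfolding g_def d by (simp add: RS)
  qed
  have right: "g y \<in> D \<and> f (g y) = y" for y
  proof -
    define d where "d = R (Jm y)"
    have "S d = Jm y" unfolding d_def SR ..
    then have Td: "T d = Jm (y + lam *\<^sub>C Jp d)"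
      unfolding S_def bcl_add[OF Im_bd] bcl_scale[OF Im_bd] by (simp add: algebra_simps)
    have gy: "g y = Jp d" unfolding g_def d_def ..
    have id: "inv Jp (Jp d) = d" using Ip_inj by simp
    have "g y \<in> D" unfolding gy D_def tdot_dom_def using id Td by auto
    moreover have "f (g y) = y" unfolding f_def gy tdot_def using id Td Im_inj by simp
    ultimately show ?thesis by simp
  qed
  have injD: "inj_on f D" by (metis inj_on_inverseI left)
  have bijD: "bij_betw f D UNIV"
    unfolding bij_betw_def
  proof (intro conjI injD)
    show "f ` D = UNIV"
    proof (rule set_eqI, rule iffI)
      fix y assume "y \<in> (UNIV::'b set)"
      show "y \<in> f ` D" using right[of y] by (metis image_eqI)
    qed simp
  qed
  have the: "the_inv_into D f y = g y" for y
    using the_inv_into_f_eq[OF injD, of "g y" y] right[of y] by simp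
  have "bounded_clinear g" unfolding g_def R_def S_def
    using bcl_comp[OF Ip_bd bcl_comp[OF inv_bd Im_bd]] by simp
  then have "bounded_clinear (the_inv_into D f)"
  proof -
    have "the_inv_into D f = g" using the by (rule ext)
    then show ?thesis using \<open>bounded_clinear g\<close> by simp
  qed
  then show ?thesis using bijD the unfolding resolvent_set_def D_def f_def g_def R_def S_def
    by auto
qed

end
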